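(* For every $\alpha>-\mu$ there exists $\gamma(\alpha)>0$ such that for every $N\in\mathbb N$ we have $\sum_{k=1}^{N-1}\frac{1}{\nu_{k,N}+\alpha}\leq\gamma(\alpha)$.
   Context: Fix $\mu>1$. For $N\in\mathbb N$ and $k\in\{0,\dots,N-1\}$ let $\nu_{k,N}=\mu\frac{\sin^2(k\pi/N)}{\sin^2(\pi/N)}$ (the eigenvalues of the discrete Laplacian $K_N$ on $\mathbb R^N$ with periodic boundary conditions, $(K_Nx)_k=\frac{\mu}{4\sin^2(\pi/N)}(2x_k-x_{k+1}-x_{k-1})$). An empty sum is $0$. *)

theory Defs
  imports Complex_Main
begin

text \<open>Eigenvalues of the periodic discrete Laplacian K_N.\<close>
definition nu :: "real \<Rightarrow> nat \<Rightarrow> nat \<Rightarrow> real" where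
  "nu \<mu> k N = \<mu> * (sin (real k * pi / real N))\<^sup>2 / (sin (pi / real N))\<^sup>2"

end

theory Submission
  imports Defs
begin

lemma sin_lower3:
  fixes x :: real
  assumes "0 \<le> x" "x \<le> 2"
  shows "x / 3 \<le> sin x"
proof -
  have b: "\<bar>sin x - (\<Sum>m<3. sin_coeff m * x ^ m)\<bar> \<le> inverse (fact 3) * \<bar>x\<bar> ^ 3"
    by (rule Maclaurin_sin_bound)
  have s: "(\<Sum>m<3. sin_coeff m * x ^ m) = x"
    by (simp add: numeral_3_eq_3 sin_coeff_def)
  have f: "inverse (fact 3 :: real) * \<bar>x\<bar> ^ 3 = x^3 / 6" using assms
    by (simp add: numeral_3_eq_3)
  have "\<bar>sin x - x\<bar> \<le> x^3 / 6" using b unfolding s f .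
  then have "x - x^3/6 \<le> sin x" by linarith
  moreover have "x^3 \<le> 4 * x"
  proof -
    have "x * x \<le> 2 * 2" using assms by (intro mult_mono) auto
    then have "x * (x * x) \<le> x * 4" using assms by (intro mult_left_mono) auto
    then show ?thesis by (simp add: power3_eq_cube mult.commute)
  qed
  ultimately show ?thesis by linarith
qed

lemma inv_sq_sum_le: "(\<Sum>k=1..n. 1 / (real k)^2) \<le> 2 - 1 / real (max n 1)"
proof (induction n)
  case 0 then show ?case by simp
next
  case (Suc n)
  show ?case
  proof (cases "n = 0")
    case True then show ?thesis by simp
  next
    case False
    then have n1: "real n \<ge> 1" by simp
    have "(\<Sum>k=1..Suc n. 1 / (real k)^2) = (\<Sum>k=1..n. 1 / (real k)^2) + 1 / (real n + 1)^2"
      by simp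
    also have "\<dots> \<le> 2 - 1 / real n + 1 / (real n + 1)^2" using Suc False by simp
    also have "\<dots> \<le> 2 - 1 / (real n + 1)"
    proof -
      have "1 / (real n + 1)^2 \<le> 1 / (real n * (real n + 1))"
        using n1 by (intro divide_left_mono) (auto simp: power2_eq_square)
      also have "\<dots> = 1 / real n - 1 / (real n + 1)" using n1 by (simp add: field_simps)
      finally show ?thesis by simp
    qed
    finally show ?thesis by (simp add: add.commute)
  qed
qed

lemma inv_sq_sum_le2: "(\<Sum>k=1..n. 1 / (real k)^2) \<le> 2"
  using inv_sq_sum_le[of n] by (smt (verit) divide_nonneg_nonneg of_nat_0_le_iff)

lemma term_bound:
  fixes \<mu> \<alpha> :: real
  assumes mu: "\<mu> > 1" and al: "\<alpha> > - \<mu>"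
  and k: "1 \<le> k" "k \<le> N - 1" and N: "N \<ge> 2"
  defines "\<delta> \<equiv> min 1 ((\<mu> + \<alpha>) / \<mu>)"
  shows "1 / (nu \<mu> k N + \<alpha>) \<le> 9 / (\<delta> * \<mu>) * (1 / (real k)^2 + 1 / (real (N - k))^2)"
proof -
  define m where "m = min k (N - k)"
  have m1: "1 \<le> m" and m2: "2 * m \<le> N" using k N by (auto simp: m_def)
  have Npos: "real N > 0" using N by simp
  define x where "x = real m * pi / real N"
  have x0: "pi / real N \<le> x" using m1 Npos by (simp add: x_def field_simps)
  have x1: "x \<le> pi / 2"
  proof -
    have "2 * real m \<le> real N" using m2 by linarith
    then show ?thesis using Npos pi_gt_zero by (simp add: x_def field_simps)
  qed
  have pipos: "pi / real N > 0" using Npos by simp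
  have seq: "(sin (real k * pi / real N))\<^sup>2 = (sin x)\<^sup>2"
  proof (cases "k \<le> N - k")
    case True then show ?thesis by (simp add: m_def x_def)
  next
    case False
    then have "m = N - k" by (simp add: m_def)
    then have "x = pi - real k * pi / real N" using k Npos
      by (simp add: x_def of_nat_diff field_simps)
    then show ?thesis by simp
  qed
  define t where "t = sin (pi / real N)"
  have t0: "t > 0" unfolding t_def
    using pipos x0 x1 by (intro sin_gt_zero) (auto)
  have t1: "t \<le> pi / real N" unfolding t_def using pipos by (intro sin_x_le_x) simp
  have ts: "t \<le> sin x" unfolding t_def using x0 x1 pipos by (intro sin_monotone_2pi_le) auto
  have pi2: "pi / 2 \<le> 2" using pi_less_4 by simp
  have sx: "x / 3 \<le> sin x" using x1 pi2 pipos x0 by (intro sin_lower3) auto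
  have nu_eq: "nu \<mu> k N = \<mu> * ((sin x) / t)\<^sup>2"
    unfolding nu_def seq t_def by (simp add: power_divide)
  have ratio1: "1 \<le> sin x / t" using ts t0 by simp
  have ratio2: "real m / 3 \<le> sin x / t"
  proof -
    have "real m / 3 = (x / 3) / (pi / real N)" using Npos by (simp add: x_def field_simps)
    also have "\<dots> \<le> sin x / (pi / real N)" using sx pipos by (intro divide_right_mono) auto
    also have "\<dots> \<le> sin x / t"
    proof (rule divide_left_mono)
      show "0 \<le> sin x" using sx x0 pipos by linarith
      show "t \<le> pi / real N" by (rule t1)
      show "0 < pi / real N * t" by (rule mult_pos_pos[OF pipos t0])
    qed
    finally show ?thesis .
  qed
  have nu_ge_mu: "nu \<mu> k N \<ge> \<mu>"
  proof -
    have "1 \<le> (sin x / t)\<^sup>2" using ratio1 by (simp add: one_le_power)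
    then show ?thesis unfolding nu_eq using mu by simp
  qed
  have nu_ge2: "nu \<mu> k N \<ge> \<mu> * (real m)\<^sup>2 / 9"
  proof -
    have "(real m / 3)\<^sup>2 \<le> (sin x / t)\<^sup>2" using ratio2 by (intro power_mono) auto
    then have "\<mu> * (real m / 3)\<^sup>2 \<le> \<mu> * (sin x / t)\<^sup>2" using mu by simp
    then show ?thesis unfolding nu_eq by (simp add: power_divide)
  qed
  have d0: "\<delta> > 0" using mu al by (simp add: \<delta>_def)
  have dnu: "\<delta> * nu \<mu> k N \<le> nu \<mu> k N + \<alpha>"
  proof (cases "\<alpha> \<ge> 0")
    case True
    have "\<delta> \<le> 1" by (simp add: \<delta>_def)
    then have "\<delta> * nu \<mu> k N \<le> nu \<mu> k N" using nu_ge_mu mu d0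
      by (intro mult_left_le_one_le) auto
    then show ?thesis using True by simp
  next
    case False
    have "\<delta> \<le> (\<mu> + \<alpha>) / \<mu>" by (simp add: \<delta>_def)
    then have "\<delta> * nu \<mu> k N \<le> (\<mu> + \<alpha>) / \<mu> * nu \<mu> k N" using nu_ge_mu mu
      by (intro mult_right_mono) auto
    also have "\<dots> = nu \<mu> k N + \<alpha> * (nu \<mu> k N / \<mu>)" using mu by (simp add: field_simps)
    also have "\<dots> \<le> nu \<mu> k N + \<alpha>"
    proof -
      have "nu \<mu> k N / \<mu> \<ge> 1" using nu_ge_mu mu by simp
      then have "\<alpha> * (nu \<mu> k N / \<mu>) \<le> \<alpha> * 1" using False
        by (intro mult_left_mono_neg) auto
      then show ?thesis by simp
    qed
    finally show ?thesis .
  qed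
  have lowb: "\<delta> * \<mu> * (real m)\<^sup>2 / 9 \<le> nu \<mu> k N + \<alpha>"
  proof -
    have "\<delta> * (\<mu> * (real m)\<^sup>2 / 9) \<le> \<delta> * nu \<mu> k N" using nu_ge2 d0 by simp
    then show ?thesis using dnu by simp
  qed
  have lpos: "\<delta> * \<mu> * (real m)\<^sup>2 / 9 > 0" using d0 mu m1 by simp
  have "1 / (nu \<mu> k N + \<alpha>) \<le> 1 / (\<delta> * \<mu> * (real m)\<^sup>2 / 9)"
    using lowb lpos by (intro divide_left_mono) auto
  also have "\<dots> = 9 / (\<delta> * \<mu>) * (1 / (real m)\<^sup>2)" by simp
  also have "\<dots> \<le> 9 / (\<delta> * \<mu>) * (1 / (real k)^2 + 1 / (real (N - k))^2)"
  proof -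
    have "1 / (real m)\<^sup>2 \<le> 1 / (real k)^2 + 1 / (real (N - k))^2"
      by (cases "k \<le> N - k") (auto simp: m_def min_def)
    then show ?thesis using d0 mu by (intro mult_left_mono) auto
  qed
  finally show ?thesis .
qed

theorem lemma5p1:
  fixes \<mu> \<alpha> :: real
  assumes "\<mu> > 1" and "\<alpha> > - \<mu>"
  shows "\<exists>\<gamma>>0. \<forall>N::nat. (\<Sum>k=1..N-1. 1 / (nu \<mu> k N + \<alpha>)) \<le> \<gamma>"
proof -
  define \<delta> where "\<delta> = min 1 ((\<mu> + \<alpha>) / \<mu>)"
  have d0: "\<delta> > 0" using assms by (simp add: \<delta>_def)
  define C where "C = 9 / (\<delta> * \<mu>)"
  have C0: "C > 0" using d0 assms by (simp add: C_def)
  show ?thesis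
  proof (intro exI conjI allI)
    show "4 * C > 0" using C0 by simp
    fix N :: nat
    show "(\<Sum>k=1..N-1. 1 / (nu \<mu> k N + \<alpha>)) \<le> 4 * C"
    proof (cases "N \<ge> 2")
      case False
      then have "N - 1 = 0" by simp
      then show ?thesis using C0 by simp
    next
      case True
      have "(\<Sum>k=1..N-1. 1 / (nu \<mu> k N + \<alpha>))
          \<le> (\<Sum>k=1..N-1. C * (1 / (real k)^2 + 1 / (real (N - k))^2))"
        using term_bound[OF assms _ _ True] unfolding C_def \<delta>_def
        by (intro sum_mono) auto
      also have "\<dots> = C * ((\<Sum>k=1..N-1. 1 / (real k)^2) + (\<Sum>k=1..N-1. 1 / (real (N - k))^2))"
        by (simp add: sum_distrib_left sum.distrib distrib_left)
      also have "(\<Sum>k=1..N-1. 1 / (real (N - k))^2) = (\<Sum>k=1..N-1. 1 / (real k)^2)"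
      proof -
        have "(\<Sum>k=1..N-1. 1 / (real (N - k))^2) = (\<Sum>k=1..N-1. 1 / (real (N - (N - 1 + 1 - k)))^2)"
          by (rule sum.atLeastAtMost_rev)
        also have "\<dots> = (\<Sum>k=1..N-1. 1 / (real k)^2)"
          using True by (intro sum.cong) auto
        finally show ?thesis .
      qed
      also have "C * ((\<Sum>k=1..N-1. 1 / (real k)^2) + (\<Sum>k=1..N-1. 1 / (real k)^2)) \<le> C * (2 + 2)"
        using C0 inv_sq_sum_le2[of "N-1"] by (intro mult_left_mono) auto
      finally show ?thesis by simp
    qed
  qed
qed

end
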